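(* Let $X^{(\kappa)}_N$ be a twisted affine type with dual Coxeter number $h^\vee$. In the abelian group $\mathcal{T}_0(X^{(\kappa)}_N)$ the following hold for all $a\in I_\sigma$, $u\in\mathbb{C}_{\kappa_a\hbar}$: (1) $T^{(a)}(u+h^\vee)=T^{(a)}(u)^{-1}$ if $X^{(\kappa)}_N=D^{(2)}_{r+1}$ with $r+1$ even or $X^{(\kappa)}_N=D^{(3)}_4$, and $T^{(a)}(u+h^\vee)=T^{(a)}(u+\Omega)^{-1}$ otherwise; (2) $T^{(a)}(u+2h^\vee)=T^{(a)}(u)$.
   Context: Fix $\hbar\in\mathbb{C}\setminus2\pi\sqrt{-1}\mathbb{Q}$; $\mathbb{C}_c:=\mathbb{C}/(2\pi\sqrt{-1}/c)\mathbb{Z}$. Types: $A^{(2)}_{2r-1}$ ($r\ge2$, $h^\vee=2r$), $A^{(2)}_{2r}$ ($r\ge1$, $h^\vee=2r+1$), $D^{(2)}_{r+1}$ ($r\ge3$, $h^\vee=2r$), $E^{(2)}_6$ ($h^\vee=12$), $D^{(3)}_4$ ($h^\vee=6$); $\kappa=3$ for $D^{(3)}_4$, else 2; $I_\sigma=\{1,\dots,r\}$ in the first three cases, $\{1,2,3,4\}$ for $E^{(2)}_6$, $\{1,2\}$ for $D^{(3)}_4$. $\kappa_a$: $A^{(2)}_{2r-1}$: $\kappa_a=1$ ($a<r$), $\kappa_r=2$; $A^{(2)}_{2r}$: all 1; $D^{(2)}_{r+1}$: $\kappa_a=2$ ($a<r$), $\kappa_r=1$; $E^{(2)}_6$: $\kappa_1=\kappa_2=1$,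 $\kappa_3=\kappa_4=2$; $D^{(3)}_4$: $\kappa_1=1$, $\kappa_2=3$. $\Omega=2\pi\sqrt{-1}/(\kappa\hbar)$. $\mathcal{T}_0(X^{(\kappa)}_N)$ is the abelian group (written multiplicatively) generated by $T^{(a)}(u)$ ($a\in I_\sigma$, $u\in\mathbb{C}_{\kappa_a\hbar}$) with relations $T^{(a)}(u-1)T^{(a)}(u+1)=M^{(a)}(u)$, $T^{(0)}(u)=1$, where: $A^{(2)}_{2r-1}$: $M^{(a)}=T^{(a-1)}(u)T^{(a+1)}(u)$ ($a\le r-1$), $M^{(r)}=T^{(r-1)}(u)T^{(r-1)}(u+\Omega)$; $A^{(2)}_{2r}$: $M^{(a)}=T^{(a-1)}(u)T^{(a+1)}(u)$ ($a\le r-1$), $M^{(r)}=T^{(r-1)}(u)T^{(r)}(u+\Omega)$; $D^{(2)}_{r+1}$: $M^{(a)}=T^{(a-1)}(u)T^{(a+1)}(u)$ ($a\le r-2$), $M^{(r-1)}=T^{(r-2)}(u)T^{(r)}(u)T^{(r)}(u+\Omega)$, $M^{(r)}=T^{(r-1)}(u)$; $E^{(2)}_6$: $M^{(1)}=T^{(2)}(u)$, $M^{(2)}=T^{(1)}(u)T^{(3)}(u)$, $M^{(3)}=T^{(2)}(u)T^{(2)}(u+\Omega)T^{(4)}(u)$, $M^{(4)}=T^{(3)}(u)$; $D^{(3)}_4$: $M^{(1)}=T^{(2)}(u)$, $M^{(2)}=T^{(1)}(u)T^{(1)}(u-\Omega)T^{(1)}(u+\Omega)$. *)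

theory Defs
  imports Complex_Main
begin

text \<open>Twisted affine types. Parameters:
  A2odd r = A^{(2)}_{2r-1} (r \<ge> 2), A2even r = A^{(2)}_{2r} (r \<ge> 1),
  D2 r = D^{(2)}_{r+1} (r \<ge> 3), E26 = E^{(2)}_6, D34 = D^{(3)}_4.\<close>

datatype twisted_type = A2odd nat | A2even nat | D2 nat | E26 | D34

fun tt_wf :: "twisted_type \<Rightarrow> bool" where
  "tt_wf (A2odd r) = (r \<ge> 2)"
| "tt_wf (A2even r) = (r \<ge> 1)"
| "tt_wf (D2 r) = (r \<ge> 3)"
| "tt_wf E26 = True"
| "tt_wf D34 = True"

fun hvee :: "twisted_type \<Rightarrow> nat" where
  "hvee (A2odd r) = 2 * r"
| "hvee (A2even r) = 2 * r + 1"
| "hvee (D2 r) = 2 * r"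
| "hvee E26 = 12"
| "hvee D34 = 6"

fun tkappa :: "twisted_type \<Rightarrow> nat" where
  "tkappa D34 = 3"
| "tkappa _ = 2"

fun Isigma :: "twisted_type \<Rightarrow> nat set" where
  "Isigma (A2odd r) = {1..r}"
| "Isigma (A2even r) = {1..r}"
| "Isigma (D2 r) = {1..r}"
| "Isigma E26 = {1,2,3,4}"
| "Isigma D34 = {1,2}"

fun kappa_a :: "twisted_type \<Rightarrow> nat \<Rightarrow> nat" where
  "kappa_a (A2odd r) a = (if a < r then 1 else 2)"
| "kappa_a (A2even r) a = 1"
| "kappa_a (D2 r) a = (if a < r then 2 else 1)"
| "kappa_a E26 a = (if a \<le> 2 then 1 else 2)"
| "kappa_a D34 a = (if a = 1 then 1 else 3)"

definition Omega :: "twisted_type \<Rightarrow> complex \<Rightarrow> complex" where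
  "Omega X hb = 2 * pi * \<i> / (of_nat (tkappa X) * hb)"

text \<open>Right-hand side M^{(a)}(u) of the T-system, written additively
  (the abelian group is written additively: products become sums).\<close>
fun Mrhs :: "twisted_type \<Rightarrow> complex \<Rightarrow> (nat \<Rightarrow> complex \<Rightarrow> 'g::ab_group_add)
              \<Rightarrow> nat \<Rightarrow> complex \<Rightarrow> 'g" where
  "Mrhs (A2odd r) W T a u =
     (if a \<le> r - 1 then T (a - 1) u + T (a + 1) u else T (r - 1) u + T (r - 1) (u + W))"
| "Mrhs (A2even r) W T a u =
     (if a \<le> r - 1 then T (a - 1) u + T (a + 1) u else T (r - 1) u + T r (u + W))"
| "Mrhs (D2 r) W T a u =
     (if a \<le> r - 2 then T (a - 1) u + T (a + 1) u
      else if a = r - 1 then T (r - 2) u + T r u + T r (u + W)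
      else T (r - 1) u)"
| "Mrhs E26 W T a u =
     (if a = 1 then T 2 u
      else if a = 2 then T 1 u + T 3 u
      else if a = 3 then T 2 u + T 2 (u + W) + T 4 u
      else T 3 u)"
| "Mrhs D34 W T a u =
     (if a = 1 then T 2 u else T 1 u + T 1 (u - W) + T 1 (u + W))"

text \<open>T is a family of elements T^{(a)}(u) of an abelian group satisfying the
  defining relations of T_0(X): T^{(a)} is a function on C_{kappa_a hbar}
  (i.e. periodic with period 2 pi i/(kappa_a hbar)), T^{(0)} = identity, and
  the T-system relations hold.\<close>
definition is_T0_family :: "twisted_type \<Rightarrow> complex \<Rightarrow> (nat \<Rightarrow> complex \<Rightarrow> 'g::ab_group_add) \<Rightarrow> bool" where
  "is_T0_family X hb T \<longleftrightarrow>
     (\<forall>u. T 0 u = 0) \<and>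
     (\<forall>a\<in>Isigma X. \<forall>u. T a (u + 2 * pi * \<i> / (of_nat (kappa_a X a) * hb)) = T a u) \<and>
     (\<forall>a\<in>Isigma X. \<forall>u. T a (u - 1) + T a (u + 1) = Mrhs X (Omega X hb) T a u)"

end

theory Submission
  imports Defs
begin


definition Z :: "(complex \<Rightarrow> 'g::ab_group_add) \<Rightarrow> complex \<Rightarrow> nat \<Rightarrow> 'g" where
  "Z f b k = (\<Sum>j<k. f (b + 2 * of_nat j))"

definition Sg :: "(complex \<Rightarrow> 'g::ab_group_add) \<Rightarrow> nat \<Rightarrow> complex \<Rightarrow> 'g" where
  "Sg f k u = Z f (u - of_nat k + 1) k"

lemma Z_0[simp]: "Z f b 0 = 0" by (simp add: Z_def)

lemma Z_Suc: "Z f b (Suc k) = Z f b k + f (b + 2 * of_nat k)"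
  by (simp add: Z_def)

lemma Z_Suc_shift: "Z f b (Suc k) = f b + Z f (b + 2) k"
  unfolding Z_def by (subst sum.lessThan_Suc_shift) (simp add: algebra_simps)

lemma Z_add: "Z f b (p + q) = Z f b p + Z f (b + 2 * of_nat p) q"
proof (induction q)
  case 0 then show ?case by simp
next
  case (Suc q)
  then show ?case by (simp add: Z_Suc algebra_simps)
qed

lemma Z_anti:
  assumes "\<And>v. f (v + c) = - f (v + d)"
  shows "Z f (b + c) k = - Z f (b + d) k"
proof -
  have "Z f (b + c) k = (\<Sum>j<k. - f (b + 2 * of_nat j + d))"
    unfolding Z_def
  proof (rule sum.cong)
    fix x assume "x \<in> {..<k}"
    have "f (b + c + 2 * of_nat x) = f ((b + 2 * of_nat x) + c)" by (simp add: ac_simps)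
    then show "f (b + c + 2 * of_nat x) = - f (b + 2 * of_nat x + d)" using assms by simp
  qed simp
  also have "\<dots> = - Z f (b + d) k" by (simp add: Z_def sum_negf algebra_simps)
  finally show ?thesis .
qed

lemma Z_per:
  assumes "\<And>v. f (v + c) = f (v + d)"
  shows "Z f (b + c) k = Z f (b + d) k"
  unfolding Z_def
proof (rule sum.cong)
  fix x assume "x \<in> {..<k}"
  have "f (b + c + 2 * of_nat x) = f ((b + 2 * of_nat x) + c)" by (simp add: ac_simps)
  also have "\<dots> = f ((b + 2 * of_nat x) + d)" using assms by simp
  finally show "f (b + c + 2 * of_nat x) = f (b + d + 2 * of_nat x)" by (simp add: ac_simps)
qed simp

lemma Sg_1[simp]: "Sg f 1 u = f u" "Sg f (Suc 0) u = f u" by (simp_all add: Sg_def Z_def)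
lemma Sg_0[simp]: "Sg f 0 u = 0" by (simp add: Sg_def)

lemma Sg_step:
  "Sg f (Suc (Suc m)) u = Sg f (Suc m) (u - 1) + Sg f (Suc m) (u + 1) - Sg f m u"
proof -
  define b where "b = u - of_nat m - 1"
  have 1: "Sg f (Suc (Suc m)) u = f b + Z f (b + 2) (Suc m)"
    unfolding Sg_def b_def by (subst Z_Suc_shift) (simp add: algebra_simps)
  have 2: "Sg f (Suc m) (u - 1) = f b + Z f (b + 2) m"
    unfolding Sg_def b_def by (subst Z_Suc_shift) (simp add: algebra_simps)
  have 3: "Sg f (Suc m) (u + 1) = Z f (b + 2) (Suc m)"
    unfolding Sg_def b_def by (simp add: algebra_simps)
  have 4: "Sg f m u = Z f (b + 2) m"
    unfolding Sg_def b_def by (simp add: algebra_simps)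
  show ?thesis unfolding 1 2 3 4 by (simp add: algebra_simps)
qed

lemma Sg_step2:
  "Sg f (Suc (Suc m)) u = f (u - of_nat m - 1) + Sg f m u + f (u + of_nat m + 1)"
proof -
  define b where "b = u - of_nat m - 1"
  have 1: "Sg f (Suc (Suc m)) u = f b + Z f (b + 2) (Suc m)"
    unfolding Sg_def b_def by (subst Z_Suc_shift) (simp add: algebra_simps)
  have 4: "Sg f m u = Z f (b + 2) m"
    unfolding Sg_def b_def by (simp add: algebra_simps)
  have 5: "b + 2 + 2 * of_nat m = u + of_nat m + 1" unfolding b_def by (simp add: algebra_simps)
  show ?thesis unfolding 1 4 Z_Suc 5 by (simp add: b_def algebra_simps)
qed

lemma Sg_anti:
  assumes "\<And>v. f (v + c) = - f (v + d)"
  shows "Sg f k (u + c) = - Sg f k (u + d)"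
  using Z_anti[of f c d "u - of_nat k + 1" k, OF assms] unfolding Sg_def
  by (simp add: algebra_simps)

lemma Sg_per:
  assumes "\<And>v. f (v + c) = f (v + d)"
  shows "Sg f k (u + c) = Sg f k (u + d)"
  using Z_per[of f c d "u - of_nat k + 1" k, OF assms] unfolding Sg_def
  by (simp add: algebra_simps)

lemma chain:
  fixes T :: "nat \<Rightarrow> complex \<Rightarrow> 'g::ab_group_add"
  assumes T0: "\<And>u. T 0 u = 0"
    and rel: "\<And>a u. 1 \<le> a \<Longrightarrow> a \<le> m \<Longrightarrow> T a (u - 1) + T a (u + 1) = T (a - 1) u + T (a + 1) u"
  shows "a \<le> m + 1 \<Longrightarrow> T a u = Sg (T 1) a u"
proof (induction a arbitrary: u rule: less_induct)
  case (less a)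
  show ?case
  proof (cases a)
    case 0 then show ?thesis by (simp add: T0)
  next
    case (Suc k)
    show ?thesis
    proof (cases k)
      case 0 then show ?thesis using Suc by simp
    next
      case (Suc j)
      have "T (Suc j) (u - 1) + T (Suc j) (u + 1) = T j u + T (Suc (Suc j)) u"
        using rel[of "Suc j" u] less.prems \<open>a = Suc k\<close> Suc by simp
      then have "T a u = T (Suc j) (u - 1) + T (Suc j) (u + 1) - T j u"
        using \<open>a = Suc k\<close> Suc by (simp add: algebra_simps)
      also have "\<dots> = Sg (T 1) (Suc j) (u - 1) + Sg (T 1) (Suc j) (u + 1) - Sg (T 1) j u"
        using less.IH less.prems \<open>a = Suc k\<close> Suc by simp
      also have "\<dots> = Sg (T 1) a u" using \<open>a = Suc k\<close> Suc by (simp add: Sg_step)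
      finally show ?thesis .
    qed
  qed
qed

lemma Sg_split:
  assumes "a \<le> n + 1"
  shows "Sg f a (u + of_nat (n + 1)) + Sg f (n + 1 - a) u = Sg f (n + 1) (u + of_nat a)"
proof -
  define p where "p = n + 1 - a"
  have np: "n + 1 = p + a" using assms p_def by simp
  have "Sg f (n + 1) (u + of_nat a) = Z f (u + of_nat a - of_nat (n+1) + 1) (p + a)"
    unfolding Sg_def np by simp
  also have "\<dots> = Z f (u + of_nat a - of_nat (n+1) + 1) p + Z f (u + of_nat a - of_nat (n+1) + 1 + 2 * of_nat p) a"
    by (rule Z_add)
  also have "u + of_nat a - of_nat (n+1) + 1 = u - of_nat p + 1"
    unfolding np by (simp add: algebra_simps)
  also have "u - of_nat p + 1 + 2 * of_nat p = u + of_nat (n + 1) - of_nat a + 1"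
    unfolding np by (simp add: algebra_simps)
  finally show ?thesis unfolding Sg_def p_def by (simp add: algebra_simps)
qed

lemma A_lemma:
  fixes T :: "nat \<Rightarrow> complex \<Rightarrow> 'g::ab_group_add"
  assumes T0: "\<And>u. T 0 u = 0" and Tn: "\<And>u. T (n + 1) u = 0"
    and rel: "\<And>a u. 1 \<le> a \<Longrightarrow> a \<le> n \<Longrightarrow> T a (u - 1) + T a (u + 1) = T (a - 1) u + T (a + 1) u"
    and a: "a \<le> n + 1"
  shows "T a (u + of_nat (n + 1)) = - T (n + 1 - a) u"
proof -
  have ch: "\<And>a u. a \<le> n + 1 \<Longrightarrow> T a u = Sg (T 1) a u"
    using chain[of T n] T0 rel by blast
  have "Sg (T 1) (n + 1) (u + of_nat a) = 0" using ch[of "n+1"] Tn by simp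
  then show ?thesis using Sg_split[OF a, of "T 1" u] ch[OF a] ch[of "n + 1 - a"]
    by (simp add: eq_neg_iff_add_eq_0)
qed



lemma Om2: "tkappa X = 2 \<Longrightarrow> 2 * pi * \<i> / hb = 2 * Omega X hb"
  "tkappa X = 2 \<Longrightarrow> 2 * pi * \<i> / (2 * hb) = Omega X hb"
  by (cases "hb = 0"; simp add: Omega_def field_simps)+

lemma A2odd_case:
  fixes T :: "nat \<Rightarrow> complex \<Rightarrow> 'g::ab_group_add"
  assumes r: "r \<ge> 2" and fam: "is_T0_family (A2odd r) hb T" and a: "a \<in> {1..r}"
  shows "T a (u + of_nat (2*r)) = - T a (u + Omega (A2odd r) hb)"
    and "T a (u + 2 * Omega (A2odd r) hb) = T a u"
proof -
  define W where "W = Omega (A2odd r) hb"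
  have T0: "\<And>u. T 0 u = 0" using fam by (simp add: is_T0_family_def)
  have per0: "\<And>a u. 1 \<le> a \<Longrightarrow> a \<le> r \<Longrightarrow> T a (u + 2 * pi * \<i> / (of_nat (kappa_a (A2odd r) a) * hb)) = T a u"
    using fam by (simp add: is_T0_family_def)
  have perA: "T a (u + 2 * W) = T a u" if "1 \<le> a" "a < r" for a u
    using per0[of a u] that Om2(1)[of "A2odd r" hb] unfolding W_def by (simp)
  have perR: "\<And>u. T r (u + W) = T r u"
    using per0[of r] Om2(2)[of "A2odd r" hb] r unfolding W_def by simp
  have perR2: "\<And>u. T r (u + 2 * W) = T r u"
  proof -
    fix u have "T r (u + 2 * W) = T r ((u + W) + W)" by (simp add: algebra_simps)
    also have "\<dots> = T r (u + W)" by (rule perR)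
    also have "\<dots> = T r u" by (rule perR)
    finally show "T r (u + 2 * W) = T r u" .
  qed
  have rel0: "\<And>a u. 1 \<le> a \<Longrightarrow> a \<le> r \<Longrightarrow> T a (u - 1) + T a (u + 1) = Mrhs (A2odd r) W T a u"
    using fam by (simp add: is_T0_family_def W_def)
  have relA: "\<And>a u. 1 \<le> a \<Longrightarrow> a < r \<Longrightarrow> T a (u - 1) + T a (u + 1) = T (a - 1) u + T (a + 1) u"
    using rel0 by fastforce
  have relR: "T r (u - 1) + T r (u + 1) = T (r - 1) u + T (r - 1) (u + W)" for u
  proof -
    have "\<not> r \<le> r - 1" using r by simp
    then show ?thesis using rel0[of r u] r by simp
  qed
  define Tt where "Tt a u = (if a \<le> r then T a u else T (2 * r - a) (u + W))" for a u
  have Tt0: "\<And>u. Tt 0 u = 0" by (simp add: Tt_def T0)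
  have Ttn: "\<And>u. Tt (2 * r - 1 + 1) u = 0" using r by (simp add: Tt_def T0)
  have Ttrel: "Tt b (u - 1) + Tt b (u + 1) = Tt (b - 1) u + Tt (b + 1) u"
    if b1: "1 \<le> b" and b2: "b \<le> 2 * r - 1" for b u
  proof -
    consider "b < r" | "b = r" | "b > r" by linarith
    then show ?thesis
    proof cases
      case 1
      then have "b - 1 \<le> r" "b + 1 \<le> r" "b \<le> r" by auto
      then show ?thesis using relA[OF b1 1, of u] by (simp add: Tt_def)
    next
      case 2 then show ?thesis using relR r by (simp add: Tt_def mult_2 numeral_2_eq_2)
    next
      case 3
      define c where "c = 2 * r - b"
      have c1: "1 \<le> c" "c < r" using 3 b2 c_def by auto
      have e: "T c (u + W - 1) + T c (u + W + 1) = T (c - 1) (u + W) + T (c + 1) (u + W)"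
        using relA[OF c1] .
      have l: "Tt b (u - 1) + Tt b (u + 1) = T c (u + W - 1) + T c (u + W + 1)"
        using 3 by (simp add: Tt_def c_def algebra_simps)
      have r1: "Tt (b + 1) u = T (c - 1) (u + W)" using 3 by (simp add: Tt_def c_def)
      have r2: "Tt (b - 1) u = T (c + 1) (u + W)"
      proof (cases "b - 1 \<le> r")
        case True
        then have "b - 1 = r" "c + 1 = r" using 3 c_def r by auto
        then show ?thesis using perR by (simp add: Tt_def)
      next
        case False
        moreover have "2 * r - (b - 1) = c + 1" using 3 b2 c_def by auto
        ultimately show ?thesis by (simp add: Tt_def)
      qed
      show ?thesis using e l r1 r2 by (simp add: algebra_simps)
    qed
  qed
  have main: "Tt a (u + of_nat (2 * r - 1 + 1)) = - Tt (2 * r - 1 + 1 - a) u"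
  proof (rule A_lemma[of Tt])
    show "a \<le> 2 * r - 1 + 1" using a r by simp
  qed (fact Tt0, fact Ttn, fact Ttrel)
  have nn: "2 * r - 1 + 1 = 2 * r" using r by simp
  have m1: "Tt a (u + of_nat (2 * r)) = - Tt (2 * r - a) u" using main unfolding nn .
  have m2: "Tt a (u + of_nat (2 * r)) = T a (u + of_nat (2 * r))" using a by (simp add: Tt_def)
  show "T a (u + of_nat (2*r)) = - T a (u + Omega (A2odd r) hb)"
  proof (cases "a = r")
    case True
    then have "Tt (2 * r - a) u = T r u" by (simp add: Tt_def mult_2)
    also have "\<dots> = T a (u + W)" using perR[of u] True by simp
    finally show ?thesis using m1 m2 unfolding W_def by simp
  next
    case False
    then have "2 * r - a > r" "2 * r - (2 * r - a) = a" using a by auto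
    then have "Tt (2 * r - a) u = T a (u + W)" by (simp add: Tt_def)
    then show ?thesis using m1 m2 unfolding W_def by simp
  qed
  show "T a (u + 2 * Omega (A2odd r) hb) = T a u"
  proof (cases "a = r")
    case True then show ?thesis using perR2 unfolding W_def by simp
  next
    case False then show ?thesis using perA[of a u] a unfolding W_def by simp
  qed
qed



lemma A2even_case:
  fixes T :: "nat \<Rightarrow> complex \<Rightarrow> 'g::ab_group_add"
  assumes r: "r \<ge> 1" and fam: "is_T0_family (A2even r) hb T" and a: "a \<in> {1..r}"
  shows "T a (u + of_nat (2*r+1)) = - T a (u + Omega (A2even r) hb)"
    and "T a (u + 2 * Omega (A2even r) hb) = T a u"
proof -
  define W where "W = Omega (A2even r) hb"
  have T0: "\<And>u. T 0 u = 0" using fam by (simp add: is_T0_family_def)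
  have per0: "\<And>a u. 1 \<le> a \<Longrightarrow> a \<le> r \<Longrightarrow> T a (u + 2 * pi * \<i> / (of_nat (kappa_a (A2even r) a) * hb)) = T a u"
    using fam by (simp add: is_T0_family_def)
  have perA: "T a (u + 2 * W) = T a u" if "1 \<le> a" "a \<le> r" for a u
    using per0[of a u] that Om2(1)[of "A2even r" hb] unfolding W_def by (simp)
  have rel0: "\<And>a u. 1 \<le> a \<Longrightarrow> a \<le> r \<Longrightarrow> T a (u - 1) + T a (u + 1) = Mrhs (A2even r) W T a u"
    using fam by (simp add: is_T0_family_def W_def)
  have relA: "\<And>a u. 1 \<le> a \<Longrightarrow> a < r \<Longrightarrow> T a (u - 1) + T a (u + 1) = T (a - 1) u + T (a + 1) u"
    using rel0 by fastforce
  have relR: "T r (u - 1) + T r (u + 1) = T (r - 1) u + T r (u + W)" for u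
  proof -
    have "\<not> r \<le> r - 1" using r by simp
    then show ?thesis using rel0[of r u] r by simp
  qed
  define Tt where "Tt a u = (if a \<le> r then T a u else T (2 * r + 1 - a) (u + W))" for a u
  have Tt0: "\<And>u. Tt 0 u = 0" by (simp add: Tt_def T0)
  have Ttn: "\<And>u. Tt (2 * r + 1) u = 0" using r by (simp add: Tt_def T0)
  have Ttrel: "Tt b (u - 1) + Tt b (u + 1) = Tt (b - 1) u + Tt (b + 1) u"
    if b1: "1 \<le> b" and b2: "b \<le> 2 * r" for b u
  proof -
    consider "b < r" | "b = r" | "b > r" by linarith
    then show ?thesis
    proof cases
      case 1
      then have "b - 1 \<le> r" "b + 1 \<le> r" "b \<le> r" by auto
      then show ?thesis using relA[OF b1 1, of u] by (simp add: Tt_def)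
    next
      case 2
      then have "Tt (b + 1) u = T r (u + W)" "Tt (b - 1) u = T (r - 1) u"
        "Tt b (u - 1) = T r (u - 1)" "Tt b (u + 1) = T r (u + 1)" by (simp_all add: Tt_def)
      then show ?thesis using relR[of u] by simp
    next
      case 3
      define c where "c = 2 * r + 1 - b"
      have c1: "1 \<le> c" "c \<le> r" using 3 b2 c_def by auto
      have l: "Tt b (u - 1) + Tt b (u + 1) = T c (u + W - 1) + T c (u + W + 1)"
        using 3 by (simp add: Tt_def c_def algebra_simps)
      have r1: "Tt (b + 1) u = T (c - 1) (u + W)"
      proof -
        have "2 * r + 1 - (b + 1) = c - 1" using c_def 3 b2 by auto
        then show ?thesis using 3 by (simp add: Tt_def)
      qed
      show ?thesis
      proof (cases "c = r")
        case True
        then have bb: "b - 1 = r" using c_def 3 b2 by auto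
        have e: "T c (u + W - 1) + T c (u + W + 1) = T (c - 1) (u + W) + T c (u + W + W)"
          using relR[of "u + W"] True by simp
        have "T c (u + W + W) = T c u" using perA[of c u] c1 by (simp add: algebra_simps)
        moreover have "Tt (b - 1) u = T c u" using bb True by (simp add: Tt_def)
        ultimately show ?thesis using e l r1 by (simp add: algebra_simps)
      next
        case False
        then have cr: "c < r" using c1 by simp
        have e: "T c (u + W - 1) + T c (u + W + 1) = T (c - 1) (u + W) + T (c + 1) (u + W)"
          using relA[OF c1(1) cr] .
        have "\<not> b - 1 \<le> r" "2 * r + 1 - (b - 1) = c + 1" using cr c_def 3 b2 by auto
        then have "Tt (b - 1) u = T (c + 1) (u + W)" by (simp add: Tt_def)
        then show ?thesis using e l r1 by (simp add: algebra_simps)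
      qed
    qed
  qed
  have main: "Tt a (u + of_nat (2 * r + 1)) = - Tt (2 * r + 1 - a) u"
  proof (rule A_lemma[of Tt])
    show "a \<le> 2 * r + 1" using a r by simp
  qed (fact Tt0, fact Ttn, fact Ttrel)
  have m2: "Tt a (u + of_nat (2 * r + 1)) = T a (u + of_nat (2 * r + 1))" using a by (simp add: Tt_def)
  have "2 * r + 1 - a > r" "2 * r + 1 - (2 * r + 1 - a) = a" using a by auto
  then have "Tt (2 * r + 1 - a) u = T a (u + W)" by (simp add: Tt_def)
  then show "T a (u + of_nat (2*r+1)) = - T a (u + Omega (A2even r) hb)"
    using main m2 unfolding W_def by simp
  show "T a (u + 2 * Omega (A2even r) hb) = T a u"
    using perA[of a u] a unfolding W_def by simp
qed



lemma Sg_diff: "Sg f k (w + 1) + f (w - of_nat k) = Sg f k (w - 1) + f (w + of_nat k)"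
proof -
  have a: "Sg f k (w + 1) = Z f (w - of_nat k + 2) k" unfolding Sg_def by (simp add: algebra_simps)
  have b: "Sg f k (w - 1) = Z f (w - of_nat k) k" unfolding Sg_def by (simp add: algebra_simps)
  have c: "Z f (w - of_nat k) (Suc k) = f (w - of_nat k) + Z f (w - of_nat k + 2) k" by (rule Z_Suc_shift)
  have d: "Z f (w - of_nat k) (Suc k) = Z f (w - of_nat k) k + f (w + of_nat k)"
    by (simp add: Z_Suc algebra_simps)
  show ?thesis using a b c d by (simp add: algebra_simps)
qed

lemma D2_case:
  fixes T :: "nat \<Rightarrow> complex \<Rightarrow> 'g::ab_group_add"
  assumes r: "r \<ge> 3" and fam: "is_T0_family (D2 r) hb T" and a: "a \<in> {1..r}"
  shows "T a (u + of_nat (2*r)) = - T a (u + (if even (r + 1) then 0 else Omega (D2 r) hb))"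
    and "T a (u + 2 * (if even (r + 1) then 0 else Omega (D2 r) hb)) = T a u"
proof -
  define W where "W = Omega (D2 r) hb"
  define f where "f = T 1"
  have T0: "\<And>u. T 0 u = 0" using fam by (simp add: is_T0_family_def)
  have per0: "\<And>a u. 1 \<le> a \<Longrightarrow> a \<le> r \<Longrightarrow> T a (u + 2 * pi * \<i> / (of_nat (kappa_a (D2 r) a) * hb)) = T a u"
    using fam by (simp add: is_T0_family_def)
  have perA: "T a (u + W) = T a u" if "1 \<le> a" "a < r" for a u
    using per0[of a u] that Om2(2)[of "D2 r" hb] unfolding W_def by (simp)
  have perR: "T r (u + 2 * W) = T r u" for u
    using per0[of r u] r Om2(1)[of "D2 r" hb] unfolding W_def by (simp)
  have rel0: "\<And>a u. 1 \<le> a \<Longrightarrow> a \<le> r \<Longrightarrow> T a (u - 1) + T a (u + 1) = Mrhs (D2 r) W T a u"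
    using fam by (simp add: is_T0_family_def W_def)
  have relA: "\<And>a u. 1 \<le> a \<Longrightarrow> a \<le> r - 2 \<Longrightarrow> T a (u - 1) + T a (u + 1) = T (a - 1) u + T (a + 1) u"
    using rel0 by fastforce
  have relR1: "T (r - 1) (u - 1) + T (r - 1) (u + 1) = T (r - 2) u + T r u + T r (u + W)" for u
  proof -
    have "\<not> r - 1 \<le> r - 2" using r by simp
    then show ?thesis using rel0[of "r - 1" u] r by simp
  qed
  have relR: "T r (u - 1) + T r (u + 1) = T (r - 1) u" for u
  proof -
    have "\<not> r \<le> r - 2" "r \<noteq> r - 1" using r by auto
    then show ?thesis using rel0[of r u] r by simp
  qed
  have ch: "T a u = Sg f a u" if "a \<le> r - 1" for a u
  proof -
    have "a \<le> r - 2 + 1" using that r by simp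
    from chain[of T "r - 2", OF T0 relA this] show ?thesis unfolding f_def .
  qed
  have rr: "r = Suc (Suc (r - 2))" "r - 1 = Suc (r - 2)" using r by auto
  have PQ: "T r u + T r (u + W) = Sg f r u" for u
  proof -
    have "Sg f r u = Sg f (r - 1) (u - 1) + Sg f (r - 1) (u + 1) - Sg f (r - 2) u"
      using Sg_step[of f "r - 2" u] rr by simp
    also have "\<dots> = T (r - 1) (u - 1) + T (r - 1) (u + 1) - T (r - 2) u"
      using ch[of "r - 1"] ch[of "r - 2"] by simp
    also have "\<dots> = T r u + T r (u + W)" using relR1[of u] by (simp add: algebra_simps)
    finally show ?thesis by simp
  qed
  have anti0: "f (u - of_nat r) + f (u + of_nat r) = 0" for u
  proof -
    have r1: "r + 1 = Suc (Suc (r - 1))" "r = Suc (r - 1)" using r by auto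
    have "Sg f (r + 1) u = Sg f r (u - 1) + Sg f r (u + 1) - Sg f (r - 1) u"
      using Sg_step[of f "r - 1" u] r1 by simp
    also have "Sg f r (u - 1) + Sg f r (u + 1) =
        (T r (u - 1) + T r (u + 1)) + (T r (u - 1 + W) + T r (u + 1 + W))"
      using PQ[of "u - 1"] PQ[of "u + 1"] by (simp add: algebra_simps)
    also have "\<dots> = T (r - 1) u + T (r - 1) (u + W)"
      using relR[of u] relR[of "u + W"] by (simp add: algebra_simps)
    also have "\<dots> = Sg f (r - 1) u + Sg f (r - 1) u"
      using perA[of "r - 1" u] ch[of "r - 1"] r by simp
    finally have e1: "Sg f (r + 1) u = Sg f (r - 1) u" by simp
    have e2: "Sg f (r + 1) u = f (u - of_nat r) + Sg f (r - 1) u + f (u + of_nat r)"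
      using Sg_step2[of f "r - 1" u] r1 r by (simp add: of_nat_diff algebra_simps)
    show ?thesis using e1 e2 by (simp add: algebra_simps)
  qed
  have anti: "f (v + of_nat (2 * r)) = - f (v + 0)" for v
    using anti0[of "v + of_nat r"] by (simp add: algebra_simps eq_neg_iff_add_eq_0)
  have small: "T a (u + of_nat (2*r)) = - T a u" if "1 \<le> a" "a \<le> r - 1" for a u
    using ch[OF that(2)] Sg_anti[of f "of_nat (2 * r)" 0 a u, OF anti] by simp
  have step4: "T r (v + 4) = T r v - f (v + 1 - of_nat r) - f (v + 3 - of_nat r)" for v
  proof -
    have h1: "T r (v + 2) = Sg f (r - 1) (v + 1) - T r v"
      using relR[of "v + 1"] ch[of "r - 1"] by (simp add: algebra_simps)
    have h2: "T r (v + 4) = Sg f (r - 1) (v + 3) - T r (v + 2)"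
      using relR[of "v + 3"] ch[of "r - 1"] by (simp add: algebra_simps)
    have h3: "Sg f (r - 1) (v + 3) + f (v + 2 - of_nat (r - 1)) = Sg f (r - 1) (v + 1) + f (v + 2 + of_nat (r - 1))"
      using Sg_diff[of f "r - 1" "v + 2"] by (simp add: algebra_simps)
    have h4: "f (v + 2 + of_nat (r - 1)) = - f (v + 1 - of_nat r)"
      using anti0[of "v + 1"] r by (simp add: of_nat_diff algebra_simps eq_neg_iff_add_eq_0)
    have h5: "v + 2 - of_nat (r - 1) = v + 3 - of_nat r" using r by (simp add: of_nat_diff)
    have h6: "Sg f (r - 1) (v + 3) = Sg f (r - 1) (v + 1) + f (v + 2 + of_nat (r - 1)) - f (v + 2 - of_nat (r - 1))"
      using h3 by (simp add: eq_diff_eq)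
    have "T r (v + 4) = Sg f (r - 1) (v + 3) - (Sg f (r - 1) (v + 1) - T r v)"
      unfolding h2 h1 ..
    also have "\<dots> = Sg f (r - 1) (v + 1) + (- f (v + 1 - of_nat r)) - f (v + 3 - of_nat r) - (Sg f (r - 1) (v + 1) - T r v)"
      unfolding h6 h4 h5 ..
    also have "\<dots> = T r v - f (v + 1 - of_nat r) - f (v + 3 - of_nat r)"
      by (simp add: algebra_simps)
    finally show ?thesis .
  qed
  have stepl: "T r (v + 4 * of_nat l) = T r v - Z f (v + 1 - of_nat r) (2 * l)" for v l
  proof (induction l)
    case 0 then show ?case by simp
  next
    case (Suc l)
    have "T r (v + 4 * of_nat (Suc l)) = T r ((v + 4 * of_nat l) + 4)" by (simp add: algebra_simps)
    also have "\<dots> = T r (v + 4 * of_nat l) - f (v + 4 * of_nat l + 1 - of_nat r) - f (v + 4 * of_nat l + 3 - of_nat r)"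
      by (rule step4)
    also have "\<dots> = T r v - Z f (v + 1 - of_nat r) (2 * Suc l)"
      using Suc.IH by (simp add: Z_Suc algebra_simps)
    finally show ?case .
  qed
  have spin: "T r (u + of_nat (2*r)) = - T r (u + (if even (r + 1) then 0 else W))"
  proof (cases "even r")
    case True
    then obtain l where l: "r = 2 * l" by blast
    have "T r (u + of_nat (2 * r)) = T r (u + 4 * of_nat l)" using l by simp
    also have "\<dots> = T r u - Z f (u + 1 - of_nat r) r" using stepl[of u l] l by simp
    also have "Z f (u + 1 - of_nat r) r = Sg f r u" unfolding Sg_def by (simp add: algebra_simps)
    also have "T r u - Sg f r u = - T r (u + W)" using PQ[of u] by (simp add: algebra_simps)
    finally show ?thesis using True by simp
  next
    case False
    then obtain l where l: "r = 2 * l + 1" using oddE by blast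
    have "T r (u + of_nat (2 * r)) = T r ((u + 2) + 4 * of_nat l)" using l by (simp add: algebra_simps)
    also have "\<dots> = T r (u + 2) - Z f (u + 3 - of_nat r) (r - 1)" using stepl[of "u + 2" l] l
      by (simp add: algebra_simps)
    also have "Z f (u + 3 - of_nat r) (r - 1) = Sg f (r - 1) (u + 1)" unfolding Sg_def
      using r by (simp add: of_nat_diff algebra_simps)
    also have "T r (u + 2) = Sg f (r - 1) (u + 1) - T r u"
      using relR[of "u + 1"] ch[of "r - 1"] by (simp add: algebra_simps)
    finally show ?thesis using False by simp
  qed
  show "T a (u + of_nat (2*r)) = - T a (u + (if even (r + 1) then 0 else Omega (D2 r) hb))"
  proof (cases "a = r")
    case True then show ?thesis using spin unfolding W_def by simp
  next
    case False
    then have "1 \<le> a" "a \<le> r - 1" using a by auto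
    then show ?thesis using small[of a u] perA[of a u] unfolding W_def by auto
  qed
  show "T a (u + 2 * (if even (r + 1) then 0 else Omega (D2 r) hb)) = T a u"
  proof (cases "even (r + 1)")
    case True then show ?thesis by simp
  next
    case False
    show ?thesis
    proof (cases "a = r")
      case True then show ?thesis using perR False unfolding W_def by simp
    next
      case F2: False
      then have "1 \<le> a" "a < r" using a by auto
      then have "T a (u + W + W) = T a u" using perA[of a "u + W"] perA[of a u] by simp
      moreover have "u + 2 * W = u + W + W" by simp
      ultimately have "T a (u + 2 * W) = T a u" by (simp only:)
      then show ?thesis using False unfolding W_def by (simp only: if_False)
    qed
  qed
qed



lemma E26_case:
  fixes T :: "nat \<Rightarrow> complex \<Rightarrow> 'g::ab_group_add"
  assumes fam: "is_T0_family E26 hb T" and a: "a \<in> {1,2,3,4}"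
  shows "T a (u + 12) = - T a (u + Omega E26 hb)"
    and "T a (u + 2 * Omega E26 hb) = T a u"
proof -
  define W where "W = Omega E26 hb"
  define f where "f = T 1"
  have T0: "\<And>u. T 0 u = 0" using fam by (simp add: is_T0_family_def)
  have per0: "T a (u + 2 * pi * \<i> / (of_nat (kappa_a E26 a) * hb)) = T a u" if "a \<in> {1,2,3,4}" for a u
  proof -
    have "a \<in> Isigma E26" using that by simp
    then show ?thesis using fam unfolding is_T0_family_def by blast
  qed
  have per12: "T a (u + 2 * W) = T a u" if "a = 1 \<or> a = 2" for a u
    using per0[of a u] that Om2(1)[of "E26" hb] unfolding W_def by auto
  have per34: "T a (u + W) = T a u" if "a = 3 \<or> a = 4" for a u
    using per0[of a u] that Om2(2)[of "E26" hb] unfolding W_def by auto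
  have per2W: "T a (u + 2 * W) = T a u" if "a \<in> {1,2,3,4}" for a u
  proof (cases "a = 1 \<or> a = 2")
    case True then show ?thesis using per12 by blast
  next
    case False
    then have "a = 3 \<or> a = 4" using that by auto
    then have "T a (u + W + W) = T a u" using per34[of a "u + W"] per34[of a u] by simp
    moreover have "u + 2 * W = u + W + W" by simp
    ultimately show ?thesis by (simp only:)
  qed
  have rel0: "T a (u - 1) + T a (u + 1) = Mrhs E26 W T a u" if "a \<in> {1,2,3,4}" for a u
  proof -
    have "a \<in> Isigma E26" using that by simp
    then show ?thesis using fam unfolding is_T0_family_def W_def by blast
  qed
  have relA: "T a (u - 1) + T a (u + 1) = T (a - 1) u + T (a + 1) u" if "1 \<le> a" "a \<le> 2" for a u
  proof -
    have "a = 1 \<or> a = 2" using that by auto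
    then show ?thesis
    proof
      assume "a = 1"
      moreover have "(1::nat) + 1 = 2" by simp
      ultimately show ?thesis using rel0[of 1 u] T0 by (simp add: numeral_2_eq_2)
    next
      assume "a = 2"
      moreover have "(2::nat) + 1 = 3" "(2::nat) - 1 = 1" by simp_all
      ultimately show ?thesis using rel0[of 2 u] by simp
    qed
  qed
  have rel3: "T 3 (u - 1) + T 3 (u + 1) = T 2 u + T 2 (u + W) + T 4 u" for u
    using rel0[of 3 u] by simp
  have rel4: "T 4 (u - 1) + T 4 (u + 1) = T 3 u" for u
    using rel0[of 4 u] by simp
  have ch: "T a u = Sg f a u" if "a \<le> 3" for a u
  proof -
    have "a \<le> 2 + 1" using that by simp
    from chain[of T 2, OF T0 relA this] show ?thesis unfolding f_def .
  qed
  have fper: "f (v + 2 * W) = f v" for v unfolding f_def using per12[of 1 v] by simp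
  have T4: "T 4 u = Sg f 4 u - Sg f 2 (u + W)" for u
  proof -
    have "Sg f 4 u = Sg f 3 (u - 1) + Sg f 3 (u + 1) - Sg f 2 u"
      using Sg_step[of f 2 u] by (simp add: numeral_eq_Suc)
    also have "\<dots> = T 3 (u - 1) + T 3 (u + 1) - T 2 u" using ch[of 3] ch[of 2] by simp
    also have "\<dots> = T 2 (u + W) + T 4 u" using rel3[of u] by (simp add: algebra_simps)
    finally show ?thesis using ch[of 2 "u + W"] by (simp add: algebra_simps)
  qed
  have K: "f (v - 4) + f (v + 4) = f (v + W)" for v
  proof -
    have s5: "Sg f 5 v = Sg f 4 (v - 1) + Sg f 4 (v + 1) - Sg f 3 v"
      using Sg_step[of f 3 v] by (simp add: numeral_eq_Suc)
    have s3: "Sg f 3 (v + W) = Sg f 2 (v + W - 1) + Sg f 2 (v + W + 1) - f (v + W)"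
      using Sg_step[of f 1 "v + W"] by (simp add: numeral_eq_Suc)
    have p3: "Sg f 3 (v + W) = Sg f 3 v" using per34[of 3 v] ch[of 3] by simp
    have r4: "Sg f 4 (v - 1) - Sg f 2 (v - 1 + W) + (Sg f 4 (v + 1) - Sg f 2 (v + 1 + W)) = Sg f 3 v"
      using rel4[of v] T4[of "v - 1"] T4[of "v + 1"] ch[of 3 v] by simp
    have e1: "Sg f 5 v = Sg f 3 v + f (v + W)"
    proof -
      have "Sg f 5 v = (Sg f 4 (v - 1) + Sg f 4 (v + 1)) - Sg f 3 v" using s5 by simp
      also have "Sg f 4 (v - 1) + Sg f 4 (v + 1) = Sg f 3 v + (Sg f 2 (v - 1 + W) + Sg f 2 (v + 1 + W))"
        using r4 by (simp add: algebra_simps)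
      also have "Sg f 2 (v - 1 + W) + Sg f 2 (v + 1 + W) = Sg f 3 v + f (v + W)"
        using s3 p3 by (simp add: algebra_simps)
      finally show ?thesis by (simp add: algebra_simps)
    qed
    have e2: "Sg f 5 v = f (v - 4) + Sg f 3 v + f (v + 4)"
      using Sg_step2[of f 3 v] by (simp add: numeral_eq_Suc algebra_simps)
    show ?thesis using e1 e2 by (simp add: algebra_simps)
  qed
  have anti: "f (v + 12) = - f (v + W)" for v
  proof -
    have k1: "f (v + 4) + f (v + 12) = f (v + 8 + W)" using K[of "v + 8"] by (simp add: algebra_simps)
    have k2: "f (v + W) + f (v + 8 + W) = f (v + 4 + 2 * W)" using K[of "v + 4 + W"] by (simp add: algebra_simps)
    have k3: "f (v + 4 + 2 * W) = f (v + 4)" by (rule fper)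
    have "f (v + 12) = f (v + 8 + W) - f (v + 4)" using k1 by (simp add: eq_diff_eq add.commute)
    also have "f (v + 8 + W) = f (v + 4) - f (v + W)" using k2 k3 by (simp add: eq_diff_eq add.commute)
    finally show ?thesis by simp
  qed
  have anti': "f (v + 12) = - f (v + W)" for v by (rule anti)
  have small: "T a (u + 12) = - T a (u + W)" if "a \<le> 3" for a u
    using ch[OF that] Sg_anti[of f 12 W a u, OF anti'] by simp
  show "T a (u + 12) = - T a (u + Omega E26 hb)"
  proof (cases "a = 4")
    case False then show ?thesis using small[of a u] a unfolding W_def by auto
  next
    case True
    have "T 4 (u + 12) = Sg f 4 (u + 12) - Sg f 2 ((u + W) + 12)"
      using T4[of "u + 12"] by (simp add: algebra_simps)
    also have "\<dots> = - Sg f 4 (u + W) - (- Sg f 2 ((u + W) + W))"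
      using Sg_anti[of f 12 W 4 u, OF anti'] Sg_anti[of f 12 W 2 "u + W", OF anti'] by simp
    also have "\<dots> = - T 4 (u + W)" using T4[of "u + W"] by (simp add: algebra_simps)
    finally show ?thesis using True unfolding W_def by simp
  qed
  show "T a (u + 2 * Omega E26 hb) = T a u" using per2W[OF a] unfolding W_def .
qed

lemma D34_case:
  fixes T :: "nat \<Rightarrow> complex \<Rightarrow> 'g::ab_group_add"
  assumes fam: "is_T0_family D34 hb T" and a: "a \<in> {1,2}"
  shows "T a (u + 6) = - T a u"
proof -
  define W where "W = Omega D34 hb"
  define f where "f = T 1"
  have per0: "T a (u + 2 * pi * \<i> / (of_nat (kappa_a D34 a) * hb)) = T a u" if "a \<in> {1,2}" for a u
  proof -
    have "a \<in> Isigma D34" using that by simp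
    then show ?thesis using fam unfolding is_T0_family_def by blast
  qed
  have per2: "T 2 (u + W) = T 2 u" for u
    using per0[of 2 u] unfolding W_def Omega_def by simp
  have rel0: "T a (u - 1) + T a (u + 1) = Mrhs D34 W T a u" if "a \<in> {1,2}" for a u
  proof -
    have "a \<in> Isigma D34" using that by simp
    then show ?thesis using fam unfolding is_T0_family_def W_def by blast
  qed
  have rel1: "T 2 u = f (u - 1) + f (u + 1)" for u using rel0[of 1 u] unfolding f_def by simp
  have rel2: "T 2 (u - 1) + T 2 (u + 1) = f u + f (u - W) + f (u + W)" for u
    using rel0[of 2 u] unfolding f_def by simp
  have key: "f v + f (v + 6) = 0" for v
  proof -
    have a1: "T 2 (v + 1) + T 2 (v + 3) = f (v + 2) + f (v + 2 - W) + f (v + 2 + W)"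
      using rel2[of "v + 2"] by (simp add: algebra_simps)
    have a2: "T 2 (v + 3) + T 2 (v + 5) = f (v + 4) + f (v + 4 - W) + f (v + 4 + W)"
      using rel2[of "v + 4"] by (simp add: algebra_simps)
    have p1: "f (v + 2 + W) + f (v + 4 + W) = T 2 (v + 3)"
      using per2[of "v + 3"] rel1[of "v + 3 + W"] by (simp add: algebra_simps)
    have p2: "f (v + 2 - W) + f (v + 4 - W) = T 2 (v + 3)"
      using per2[of "v + 3 - W"] rel1[of "v + 3 - W"] by (simp add: algebra_simps)
    have t1: "T 2 (v + 1) = f v + f (v + 2)" using rel1[of "v + 1"] by (simp add: algebra_simps)
    have t3: "T 2 (v + 3) = f (v + 2) + f (v + 4)" using rel1[of "v + 3"] by (simp add: algebra_simps)
    have t5: "T 2 (v + 5) = f (v + 4) + f (v + 6)" using rel1[of "v + 5"] by (simp add: algebra_simps)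
    have "T 2 (v + 1) + T 2 (v + 3) + (T 2 (v + 3) + T 2 (v + 5))
       = f (v + 2) + f (v + 4) + (f (v + 2 - W) + f (v + 4 - W)) + (f (v + 2 + W) + f (v + 4 + W))"
      unfolding a1 a2 by (simp add: algebra_simps)
    also have "\<dots> = T 2 (v + 3) + T 2 (v + 3) + T 2 (v + 3)" unfolding p1 p2 t3 by simp
    finally have "T 2 (v + 1) + T 2 (v + 5) = T 2 (v + 3)" by (simp add: algebra_simps)
    then show ?thesis unfolding t1 t3 t5 by (simp add: algebra_simps)
  qed
  have fa: "f (v + 6) = - f v" for v using key[of v] by (simp add: eq_neg_iff_add_eq_0 add.commute)
  show ?thesis
  proof (cases "a = 1")
    case True then show ?thesis using fa unfolding f_def by simp
  next
    case False
    then have "a = 2" using a by simp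
    moreover have "T 2 (u + 6) = - T 2 u"
      using rel1[of "u + 6"] rel1[of u] fa[of "u - 1"] fa[of "u + 1"] by (simp add: algebra_simps)
    ultimately show ?thesis by simp
  qed
qed



lemma fin:
  fixes T :: "nat \<Rightarrow> complex \<Rightarrow> 'g::ab_group_add"
  assumes h1: "\<And>v. T a (v + h) = - T a (v + c)" and h2: "\<And>v. T a (v + 2 * c) = T a v"
  shows "T a (u + 2 * h) = T a u"
proof -
  have "T a (u + 2 * h) = T a ((u + h) + h)" by (simp add: algebra_simps)
  also have "\<dots> = - T a ((u + c) + h)" using h1[of "u + h"] by (simp add: algebra_simps)
  also have "\<dots> = T a ((u + c) + c)" using h1[of "u + c"] by simp
  also have "(u + c) + c = u + 2 * c" by simp
  also have "T a (u + 2 * c) = T a u" by (rule h2)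
  finally show ?thesis .
qed

theorem theorem9p27:
  fixes X :: twisted_type and hb :: complex
    and T :: "nat \<Rightarrow> complex \<Rightarrow> 'g::ab_group_add"
  assumes "tt_wf X"
    and "\<forall>q::rat. hb \<noteq> 2 * pi * \<i> * of_real (of_rat q)"
    and "is_T0_family X hb T"
  shows "\<forall>a\<in>Isigma X. \<forall>u.
           ((if (\<exists>r. X = D2 r \<and> even (r + 1)) \<or> X = D34
             then T a (u + of_nat (hvee X)) = - T a u
             else T a (u + of_nat (hvee X)) = - T a (u + Omega X hb))
           \<and> T a (u + 2 * of_nat (hvee X)) = T a u)"
proof (intro ballI allI)
  fix a u assume a: "a \<in> Isigma X"
  note fam = assms(3)
  show "(if (\<exists>r. X = D2 r \<and> even (r + 1)) \<or> X = D34
             then T a (u + of_nat (hvee X)) = - T a u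
             else T a (u + of_nat (hvee X)) = - T a (u + Omega X hb))
           \<and> T a (u + 2 * of_nat (hvee X)) = T a u"
  proof (cases X)
    case (A2odd r)
    have r: "r \<ge> 2" using assms(1) A2odd by simp
    have aa: "a \<in> {1..r}" using a A2odd by simp
    have f: "A2odd r = X" using A2odd by simp
    have h1: "\<And>v. T a (v + of_nat (hvee X)) = - T a (v + Omega X hb)"
      using A2odd_case(1)[OF r fam[folded f] aa] A2odd by simp
    have h2: "\<And>v. T a (v + 2 * Omega X hb) = T a v"
      using A2odd_case(2)[OF r fam[folded f] aa] A2odd by simp
    show ?thesis using h1 fin[of T a "of_nat (hvee X)" "Omega X hb", OF h1 h2] A2odd by simp
  next
    case (A2even r)
    have r: "r \<ge> 1" using assms(1) A2even by simp
    have aa: "a \<in> {1..r}" using a A2even by simp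
    have f: "A2even r = X" using A2even by simp
    have h1: "\<And>v. T a (v + of_nat (hvee X)) = - T a (v + Omega X hb)"
      using A2even_case(1)[OF r fam[folded f] aa] A2even by simp
    have h2: "\<And>v. T a (v + 2 * Omega X hb) = T a v"
      using A2even_case(2)[OF r fam[folded f] aa] A2even by simp
    show ?thesis using h1 fin[of T a "of_nat (hvee X)" "Omega X hb", OF h1 h2] A2even by simp
  next
    case (D2 r)
    have r: "r \<ge> 3" using assms(1) D2 by simp
    have aa: "a \<in> {1..r}" using a D2 by simp
    have f: "D2 r = X" using D2 by simp
    define c where "c = (if even (r + 1) then 0 else Omega (D2 r) hb)"
    have h1: "\<And>v. T a (v + of_nat (hvee X)) = - T a (v + c)"
      using D2_case(1)[OF r fam[folded f] aa] D2 unfolding c_def by simp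
    have h2: "\<And>v. T a (v + 2 * c) = T a v"
      using D2_case(2)[OF r fam[folded f] aa] unfolding c_def by simp
    have cond: "((\<exists>r'. X = D2 r' \<and> even (r' + 1)) \<or> X = D34) = even (r + 1)" using D2 by simp
    show ?thesis
    proof (cases "even (r + 1)")
      case True
      then show ?thesis using h1 fin[of T a "of_nat (hvee X)" c, OF h1 h2] cond unfolding c_def
        by simp
    next
      case False
      then show ?thesis using h1 fin[of T a "of_nat (hvee X)" c, OF h1 h2] cond D2 unfolding c_def
        by simp
    qed
  next
    case E26
    have aa: "a \<in> {1,2,3,4}" using a E26 by simp
    have f: "E26 = X" using E26 by simp
    have h1: "\<And>v. T a (v + of_nat (hvee X)) = - T a (v + Omega X hb)"
      using E26_case(1)[OF fam[folded f] aa] E26 by simp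
    have h2: "\<And>v. T a (v + 2 * Omega X hb) = T a v"
      using E26_case(2)[OF fam[folded f] aa] E26 by simp
    show ?thesis using h1 fin[of T a "of_nat (hvee X)" "Omega X hb", OF h1 h2] E26 by simp
  next
    case D34
    have aa: "a \<in> {1,2}" using a D34 by simp
    have f: "D34 = X" using D34 by simp
    have h1: "\<And>v. T a (v + of_nat (hvee X)) = - T a (v + 0)"
      using D34_case[OF fam[folded f] aa] D34 by simp
    have h2: "\<And>v. T a (v + 2 * 0) = T a v" by simp
    show ?thesis using h1 fin[of T a "of_nat (hvee X)" 0, OF h1 h2] D34 by simp
  qed
qed

end
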